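(* Let $f$ be a unimodal probability density on $\mathbb{R}$ symmetric about $0$ with $f(0)=M<\infty$ and $\int_0^\infty x f(x)\,dx<\infty$, and let $G$ be an absolutely continuous cumulative distribution function on $\mathbb{R}$ symmetric about $0$ whose density $g$ is bounded and satisfies $\int_0^\infty x\,g(x)\,dx<\infty$. Let $$M_{TV}(\lambda)=\operatorname{sign}(\lambda)\,\frac12\int_{\mathbb{R}}\bigl|2G(\lambda x)-1\bigr|\,f(x)\,dx,\qquad \lambda\in\mathbb{R},$$ and for $\alpha,\beta>0$ let $$\pi_{TV}(\lambda\mid\alpha,\beta)=\frac{1}{B(\alpha,\beta)}\Bigl(M_{TV}(\lambda)+\tfrac12\Bigr)^{\alpha-1}\Bigl(\tfrac12-M_{TV}(\lambda)\Bigr)^{\beta-1}\frac{d}{d\lambda}M_{TV}(\lambda).$$ Then the right tail of $\pi_{TV}(\lambda\mid\alpha,\beta)$ (as $\lambda\to+\infty$) is of order $O(|\lambda|^{-\beta-1})$ and its left tail (as $\lambda\to-\infty$) is of order $O(|\lambda|^{-\alpha-1})$. Moreover, if $\alpha=\beta$, then $\pi_{TV}(\lambda\mid\alpha,\beta)$ is symmetric about $0$.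
   Context: $\pi_{TV}(\lambda\mid\alpha,\beta)$ is the $BTV(\alpha,\beta)$ prior: the density of $\lambda$ induced by putting a Beta$(\alpha,\beta)$ distribution, rescaled to $(-1/2,1/2)$, on $M_{TV}(\lambda)$, for the skew-symmetric model $\frac{2}{\sigma}f\left(\frac{x-\mu}{\sigma}\right)G\left(\lambda\frac{x-\mu}{\sigma}\right)$ (i.e. with $\omega(x)=x$). $B(\alpha,\beta)$ is the Beta function. *)

theory Defs
  imports "HOL-Analysis.Analysis" "HOL-Library.Landau_Symbols"
begin

definition M_TV :: "(real \<Rightarrow> real) \<Rightarrow> (real \<Rightarrow> real) \<Rightarrow> real \<Rightarrow> real" where
  "M_TV f G lam = sgn lam * (1/2) * (LINT x|lborel. \<bar>2 * G (lam * x) - 1\<bar> * f x)"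

definition pi_TV :: "(real \<Rightarrow> real) \<Rightarrow> (real \<Rightarrow> real) \<Rightarrow> real \<Rightarrow> real \<Rightarrow> real \<Rightarrow> real" where
  "pi_TV f G a b lam = (1 / Beta a b) * (M_TV f G lam + 1/2) powr (a - 1)
      * (1/2 - M_TV f G lam) powr (b - 1) * deriv (M_TV f G) lam"

end

theory Submission imports Defs begin

lemma integral_dominated_convergence_at:
  fixes s :: "real \<Rightarrow> real \<Rightarrow> real" and w f :: "real \<Rightarrow> real"
  assumes meas: "\<And>h. s h \<in> borel_measurable lborel" and fm: "f \<in> borel_measurable lborel"
    and w: "integrable lborel w"
    and lim: "AE t in lborel. ((\<lambda>h. s h t) \<longlongrightarrow> f t) (at x)"
    and bound: "\<forall>\<^sub>F h in at x. AE t in lborel. norm (s h t) \<le> w t"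
  shows "((\<lambda>h. LINT t|lborel. s h t) \<longlongrightarrow> (LINT t|lborel. f t)) (at x)"
  unfolding tendsto_at_iff_sequentially
proof (intro allI impI)
  fix X :: "nat \<Rightarrow> real" assume Xne: "\<forall>i. X i \<in> UNIV - {x}" and Xl: "X \<longlonglongrightarrow> x"
  have X: "filterlim X (at x) sequentially"
    using Xne Xl by (auto simp: filterlim_at)
  from filterlim_iff[THEN iffD1, OF X, rule_format, OF bound]
  obtain N where wN: "\<And>n. N \<le> n \<Longrightarrow> AE t in lborel. norm (s (X n) t) \<le> w t"
    by (auto simp: eventually_sequentially)
  have "(\<lambda>n. LINT t|lborel. s (X (n + N)) t) \<longlonglongrightarrow> (LINT t|lborel. f t)"
  proof (rule integral_dominated_convergence[where w=w])
    show "AE t in lborel. norm (s (X (n + N)) t) \<le> w t" for n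
      by (rule wN) auto
    show "AE t in lborel. (\<lambda>n. s (X (n + N)) t) \<longlonglongrightarrow> f t"
      using lim
    proof eventually_elim
      fix t assume "((\<lambda>h. s h t) \<longlongrightarrow> f t) (at x)"
      hence "(\<lambda>n. s (X n) t) \<longlonglongrightarrow> f t" by (rule filterlim_compose) (rule X)
      thus "(\<lambda>n. s (X (n + N)) t) \<longlonglongrightarrow> f t" by (rule LIMSEQ_ignore_initial_segment)
    qed
  qed (use meas fm w in auto)
  thus "((\<lambda>h. LINT t|lborel. s h t) \<circ> X) \<longlonglongrightarrow> (LINT t|lborel. f t)"
    unfolding comp_def by (rule LIMSEQ_offset)
qed


context
  fixes f g G :: "real \<Rightarrow> real" and M :: real
  assumes f_nonneg: "\<And>x. f x \<ge> 0"
    and f_int: "integrable lborel f"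
    and f_prob: "(LINT x|lborel. f x) = 1"
    and f_symm: "\<And>x. f (- x) = f x"
    and f_anti: "antimono_on {0..} f" and f_mono: "mono_on {..0} f"
    and f_M: "f 0 = M"
    and g_nonneg: "\<And>x. g x \<ge> 0"
    and g_int: "integrable lborel g"
    and g_prob: "(LINT x|lborel. g x) = 1"
    and G_cdf: "\<And>x. G x = (LINT t:{..x}|lborel. g t)"
    and G_symm: "\<And>x. G (- x) = 1 - G x"
    and g_moment: "set_integrable lborel {0..} (\<lambda>x. x * g x)"
begin

lemma f_le_M: "f x \<le> M"
proof (cases "x \<ge> 0")
  case True thus ?thesis using f_anti f_M by (auto simp: monotone_on_def)
next
  case False thus ?thesis using f_mono f_M by (auto simp: monotone_on_def)
qed

lemma f_meas[measurable]: "f \<in> borel_measurable borel"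
  using f_int by (simp add: borel_measurable_integrable)
lemma g_meas[measurable]: "g \<in> borel_measurable borel"
  using g_int by (simp add: borel_measurable_integrable)

lemma G_alt: "G x = (LINT t|lborel. g t * indicator {..x} t)"
  by (simp add: G_cdf set_lebesgue_integral_def mult.commute)

lemma g_ind_int: "A \<in> sets borel \<Longrightarrow> integrable lborel (\<lambda>t. g t * indicator A t)"
  using g_int by (intro integrable_real_mult_indicator) auto

lemma G_mono: "mono G"
proof (rule monoI)
  fix x y :: real assume "x \<le> y"
  show "G x \<le> G y" unfolding G_alt
    using \<open>x \<le> y\<close> g_nonneg
    by (intro integral_mono g_ind_int) (auto simp: indicator_def)
qed

lemma G_nonneg: "G x \<ge> 0"
  unfolding G_alt using g_nonneg by (intro Bochner_Integration.integral_nonneg) auto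

lemma S_alt: "1 - G x = (LINT t|lborel. g t * indicator {x<..} t)"
proof -
  have "(LINT t|lborel. g t) = (LINT t|lborel. g t * indicator {..x} t + g t * indicator {x<..} t)"
    by (intro Bochner_Integration.integral_cong) (auto simp: indicator_def)
  also have "\<dots> = G x + (LINT t|lborel. g t * indicator {x<..} t)"
    unfolding G_alt by (intro Bochner_Integration.integral_add g_ind_int) auto
  finally show ?thesis using g_prob by simp
qed

lemma G_le1: "G x \<le> 1"
proof -
  have "0 \<le> (LINT t|lborel. g t * indicator {x<..} t)"
    using g_nonneg by (intro Bochner_Integration.integral_nonneg) auto
  thus ?thesis using S_alt[of x] by simp
qed

lemma G0: "G 0 = 1/2"
  using G_symm[of 0] by simp

lemma G_ge_half: "x \<ge> 0 \<Longrightarrow> G x \<ge> 1/2"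
  using G_mono G0 by (metis monoD)

lemma G_meas[measurable]: "G \<in> borel_measurable borel"
  using G_mono by (rule borel_measurable_mono)

lemma abs_2G: "\<bar>2 * G y - 1\<bar> = 1 - 2 * (1 - G \<bar>y\<bar>)"
proof (cases "y \<ge> 0")
  case True thus ?thesis using G_ge_half[of y] by simp
next
  case False thus ?thesis using G_ge_half[of "-y"] G_symm[of "-y"] by simp
qed

lemma f_set_int: "A \<in> sets borel \<Longrightarrow> set_integrable lborel A f"
  unfolding set_integrable_def using f_int by (intro integrable_mult_indicator) auto

lemma f_ion: "f integrable_on {a..b}"
  using f_set_int[of "{a..b}"] by (auto intro: set_borel_integral_eq_integral(1))

definition P :: "real \<Rightarrow> real" where "P s = integral {0..s} f"

lemma P_nonpos: "s \<le> 0 \<Longrightarrow> P s = 0"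
  unfolding P_def by (cases "s = 0") auto

lemma P_diff: "v \<le> u \<Longrightarrow> 0 \<le> v \<Longrightarrow> P u - P v = integral {v..u} f"
  unfolding P_def using Henstock_Kurzweil_Integration.integral_combine[of 0 v u f] f_ion by simp

lemma int_bounds: "v \<le> u \<Longrightarrow> 0 \<le> integral {v..u} f \<and> integral {v..u} f \<le> M * (u - v)"
proof
  assume "v \<le> u"
  show "0 \<le> integral {v..u} f" using f_nonneg f_ion by (intro integral_nonneg) auto
  have "integral {v..u} f \<le> integral {v..u} (\<lambda>x. M)"
    using f_le_M f_ion by (intro integral_le) auto
  thus "integral {v..u} f \<le> M * (u - v)" using \<open>v \<le> u\<close> by (simp add: mult.commute)
qed

lemma P_bounds: "0 \<le> P s \<and> P s \<le> M * max s 0"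
proof (cases "s \<le> 0")
  case True thus ?thesis by (simp add: P_nonpos)
next
  case False thus ?thesis using int_bounds[of 0 s] by (simp add: P_def)
qed

lemma P_mono: "mono P"
proof (rule monoI)
  fix u v :: real assume "u \<le> v"
  show "P u \<le> P v"
  proof (cases "u \<le> 0")
    case True thus ?thesis using P_bounds[of v] by (simp add: P_nonpos)
  next
    case False thus ?thesis using P_diff[of u v] int_bounds[of u v] \<open>u \<le> v\<close> by simp
  qed
qed

lemma P_meas[measurable]: "P \<in> borel_measurable borel"
  using P_mono by (rule borel_measurable_mono)

lemma M_nonneg: "M \<ge> 0" using f_nonneg[of 0] f_M by simp

lemma P_lip: "\<bar>P u - P v\<bar> \<le> M * \<bar>u - v\<bar>"
proof -
  have *: "0 \<le> P b - P a \<and> P b - P a \<le> M * (b - a)" if "a \<le> b" for a b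
  proof (cases "a \<le> 0")
    case True
    have "max b 0 \<le> b - a" using True that by simp
    hence "M * max b 0 \<le> M * (b - a)" using M_nonneg by (rule mult_left_mono)
    thus ?thesis using P_bounds[of b] True by (simp add: P_nonpos)
  next
    case False thus ?thesis using P_diff[of a b] int_bounds[of a b] that by simp
  qed
  show ?thesis
  proof (cases "v \<le> u")
    case True thus ?thesis using *[OF True] by simp
  next
    case False thus ?thesis using *[of u v] by simp
  qed
qed

lemma P_deriv: "0 < s \<Longrightarrow> isCont f s \<Longrightarrow> (P has_real_derivative f s) (at s)"
proof -
  assume s: "0 < s" and c: "isCont f s"
  have "((\<lambda>u. integral {0..u} f) has_vector_derivative f s) (at s within ({0..s+1} - {}))"
    using s c f_ion
    by (intro integral_has_vector_derivative_continuous_at) (auto intro: continuous_at_imp_continuous_within)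
  hence "((\<lambda>u. integral {0..u} f) has_vector_derivative f s) (at s)"
    using at_within_Icc_at[of 0 s "s+1"] s by simp
  thus ?thesis unfolding P_def has_real_derivative_iff_has_vector_derivative[symmetric]
    by (simp add: P_def[abs_def])
qed

lemma Q_eq:
  assumes c: "c > 0"
  shows "(LINT x|lborel. f x * indicator {x. \<bar>c * x\<bar> < t} x) = 2 * P (t / c)"
proof (cases "t > 0")
  case False
  hence "{x. \<bar>c * x\<bar> < t} = {}" by auto
  thus ?thesis using False c by (simp add: P_nonpos divide_nonpos_pos)
next
  case True
  define s where "s = t / c"
  have s: "s > 0" using True c by (simp add: s_def)
  have set: "{x. \<bar>c * x\<bar> < t} = {-s<..<s}"
    using c by (auto simp: s_def field_simps abs_less_iff)
  have "(LINT x|lborel. f x * indicator {x. \<bar>c * x\<bar> < t} x) = (LINT x|lborel. f x * indicator {-s..s} x)"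
  proof (rule integral_cong_AE)
    show "AE x in lborel. f x * indicator {x. \<bar>c * x\<bar> < t} x = f x * indicator {-s..s} x"
    proof -
      have "AE x in lborel. x \<notin> {-s, s}" by (intro AE_not_in countable_imp_null_set_lborel) auto
      thus ?thesis by eventually_elim (auto simp: set indicator_def)
    qed
  qed auto
  also have "\<dots> = (LINT x:{-s..s}|lborel. f x)"
    by (simp add: set_lebesgue_integral_def mult.commute)
  also have "\<dots> = integral {-s..s} f"
    using f_set_int by (intro set_borel_integral_eq_integral(2)) auto
  also have "\<dots> = integral {-s..0} f + integral {0..s} f"
    using s f_ion by (intro Henstock_Kurzweil_Integration.integral_combine[symmetric]) auto
  also have "integral {-s..0} f = integral {0..s} f"
    using Henstock_Kurzweil_Integration.integral_reflect_real[of s 0 f] f_symm by simp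
  finally show ?thesis by (simp add: P_def s_def)
qed

lemma H_meas: "(\<lambda>(x,t). f x * (g t * indicator {\<bar>c * x\<bar><..} t)) \<in> borel_measurable (lborel \<Otimes>\<^sub>M lborel)"
proof -
  have "(\<lambda>(x,t). f x * (g t * indicator {\<bar>c * x\<bar><..} t)) = (\<lambda>z. f (fst z) * (g (snd z) * (if \<bar>c * fst z\<bar> < snd z then 1 else 0)))"
    by (auto simp: indicator_def fun_eq_iff)
  also have "\<dots> \<in> borel_measurable (lborel \<Otimes>\<^sub>M lborel)" by measurable
  finally show ?thesis .
qed

lemma S_nonneg: "0 \<le> 1 - G x" using G_le1[of x] by simp

lemma fS_int: "integrable lborel (\<lambda>x. f x * (1 - G \<bar>c * x\<bar>))"
proof (rule Bochner_Integration.integrable_bound[OF f_int])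
  show "(\<lambda>x. f x * (1 - G \<bar>c * x\<bar>)) \<in> borel_measurable lborel" by measurable
  show "AE x in lborel. norm (f x * (1 - G \<bar>c * x\<bar>)) \<le> norm (f x)"
    using f_nonneg G_nonneg S_nonneg by (auto intro!: mult_left_le simp: abs_mult)
qed

definition Phi :: "real \<Rightarrow> real" where "Phi c = (LINT t|lborel. g t * P (t / c))"

lemma T_eq:
  assumes c: "c > 0"
  shows "(LINT x|lborel. \<bar>2 * G (c * x) - 1\<bar> * f x) = 1 - 4 * Phi c"
proof -
  define H where "H x t = f x * (g t * indicator {\<bar>c * x\<bar><..} t)" for x t
  have inner1: "(LINT t|lborel. H x t) = f x * (1 - G \<bar>c * x\<bar>)" for x
    unfolding H_def S_alt by simp
  have Hint: "integrable (lborel \<Otimes>\<^sub>M lborel) (case_prod H)"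
  proof (rule lborel_pair.Fubini_integrable)
    show "case_prod H \<in> borel_measurable (lborel \<Otimes>\<^sub>M lborel)"
      unfolding H_def using H_meas by simp
    have "(\<lambda>x. LINT t|lborel. norm (case_prod H (x, t))) = (\<lambda>x. LINT t|lborel. H x t)"
      using f_nonneg g_nonneg by (intro ext Bochner_Integration.integral_cong) (auto simp: H_def abs_mult)
    thus "integrable lborel (\<lambda>x. LINT t|lborel. norm (case_prod H (x, t)))"
      using fS_int[of c] by (simp add: inner1)
    show "AE x in lborel. integrable lborel (\<lambda>t. case_prod H (x, t))"
      unfolding H_def by (auto intro!: integrable_mult_right g_ind_int)
  qed
  have inner2: "(LINT x|lborel. H x t) = g t * (2 * P (t / c))" for t
  proof -
    have "(LINT x|lborel. H x t) = (LINT x|lborel. g t * (f x * indicator {x. \<bar>c * x\<bar> < t} x))"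
      by (intro Bochner_Integration.integral_cong) (auto simp: H_def indicator_def)
    also have "\<dots> = g t * (2 * P (t / c))" using Q_eq[OF c, of t] by simp
    finally show ?thesis .
  qed
  have "(LINT x|lborel. \<bar>2 * G (c * x) - 1\<bar> * f x) = (LINT x|lborel. f x - 2 * (f x * (1 - G \<bar>c * x\<bar>)))"
    by (intro Bochner_Integration.integral_cong) (auto simp: abs_2G algebra_simps abs_mult)
  also have "\<dots> = 1 - 2 * (LINT x|lborel. f x * (1 - G \<bar>c * x\<bar>))"
    using f_int fS_int[of c] f_prob by simp
  also have "(LINT x|lborel. f x * (1 - G \<bar>c * x\<bar>)) = (LINT x|lborel. LINT t|lborel. H x t)"
    by (simp add: inner1)
  also have "\<dots> = (LINT t|lborel. LINT x|lborel. H x t)"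
    using lborel_pair.Fubini_integral[OF Hint] by simp
  also have "\<dots> = (LINT t|lborel. g t * (2 * P (t / c)))" by (simp add: inner2)
  also have "\<dots> = (LINT t|lborel. 2 * (g t * P (t / c)))" by (simp add: mult.left_commute)
  also have "\<dots> = 2 * Phi c" unfolding Phi_def by (rule integral_mult_right_zero)
  finally show ?thesis by simp
qed

definition w0 :: "real \<Rightarrow> real" where "w0 t = indicator {0..} t * (t * g t)"

lemma w0_int: "integrable lborel w0"
  using g_moment unfolding set_integrable_def w0_def by simp

lemma w0_nonneg: "0 \<le> w0 t" using g_nonneg by (auto simp: w0_def indicator_def)

lemma gP_bound: "c > 0 \<Longrightarrow> \<bar>g t * P (t / c)\<bar> \<le> (M / c) * w0 t"
proof -
  assume c: "c > 0"
  have "\<bar>g t * P (t / c)\<bar> = g t * P (t / c)" using g_nonneg P_bounds by simp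
  also have "\<dots> \<le> g t * (M * max (t / c) 0)" using P_bounds g_nonneg by (intro mult_left_mono) auto
  also have "\<dots> = (M / c) * w0 t"
  proof (cases "t \<ge> 0")
    case True thus ?thesis using c by (simp add: w0_def max_def field_simps)
  next
    case False thus ?thesis using c by (simp add: w0_def max_def field_simps divide_nonpos_pos)
  qed
  finally show ?thesis .
qed

lemma Phi_int: "c > 0 \<Longrightarrow> integrable lborel (\<lambda>t. g t * P (t / c))"
  by (rule Bochner_Integration.integrable_bound[of _ "\<lambda>t. (M / c) * w0 t"])
     (use w0_int gP_bound w0_nonneg M_nonneg in \<open>auto simp: abs_mult\<close>)

definition K where "K = (LINT t|lborel. w0 t)"

lemma Phi_upper: "c > 0 \<Longrightarrow> Phi c \<le> (M / c) * K"
proof -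
  assume c: "c > 0"
  have "Phi c \<le> (LINT t|lborel. (M / c) * w0 t)" unfolding Phi_def
    using gP_bound[OF c] Phi_int[OF c] w0_int by (intro integral_mono) (auto simp: abs_le_iff)
  thus ?thesis by (simp add: K_def)
qed

lemma Phi_nonneg: "0 \<le> Phi c"
  unfolding Phi_def using g_nonneg P_bounds by (intro Bochner_Integration.integral_nonneg) auto

lemma exists_pos: "\<exists>a>0. f a > 0"
proof (rule ccontr)
  assume "\<not> ?thesis"
  hence z: "\<And>a. a > 0 \<Longrightarrow> f a = 0" using f_nonneg by (metis less_eq_real_def)
  have AE0: "AE x in lborel. f x = 0"
  proof -
    have "AE x in lborel. x \<notin> {0}" by (intro AE_not_in countable_imp_null_set_lborel) auto
    thus ?thesis
    proof eventually_elim
      fix x :: real assume "x \<notin> {0}"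
      thus "f x = 0" using z[of x] z[of "-x"] f_symm[of x] by (cases "x > 0") auto
    qed
  qed
  have "(LINT x|lborel. f x) = 0" using AE0 by (rule integral_eq_zero_AE)
  thus False using f_prob by simp
qed

lemma P_lower: assumes a: "a > 0" shows "f a * min (max s 0) a \<le> P s"
proof (cases "s \<le> 0")
  case True thus ?thesis using a by (simp add: P_nonpos)
next
  case False
  define r where "r = min s a"
  have r: "0 < r" "r \<le> s" "r \<le> a" using False a by (auto simp: r_def)
  have "f a * r = integral {0..r} (\<lambda>x. f a)" using r by simp
  also have "\<dots> \<le> integral {0..r} f"
    using f_ion r f_anti by (intro integral_le) (auto simp: monotone_on_def)
  also have "\<dots> = P r" by (simp add: P_def)
  also have "\<dots> \<le> P s" using P_mono r by (auto dest: monoD)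
  finally show ?thesis using False by (simp add: r_def)
qed

lemma min_scale: fixes a c t :: real assumes c: "c \<ge> 1" and a: "a > 0" shows "min (max t 0) a / c \<le> min (max (t / c) 0) a"
proof (cases "t \<le> 0")
  case True
  have "t / c \<le> 0" using True c by (simp add: divide_le_0_iff)
  thus ?thesis using True a by (simp add: max_def)
next
  case False
  have "min t a / c \<le> t / c" using c by (simp add: divide_right_mono)
  moreover have "min t a / c \<le> a"
  proof -
    have "min t a / c \<le> a / c" using c by (simp add: divide_right_mono)
    also have "\<dots> \<le> a" using c a by (simp add: divide_le_eq)
    finally show ?thesis .
  qed
  ultimately show ?thesis using False c by (simp add: max_def)
qed

lemma m_bound: "a > 0 \<Longrightarrow> \<bar>g t * min (max t 0) a\<bar> \<le> \<bar>a * g t\<bar>"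
proof -
  assume a: "a > 0"
  have "\<bar>g t * min (max t 0) a\<bar> = g t * min (max t 0) a" using g_nonneg a by simp
  also have "\<dots> \<le> g t * a" using g_nonneg by (intro mult_left_mono) auto
  finally show ?thesis using g_nonneg a by (simp add: mult.commute)
qed

lemma Km_pos: "a > 0 \<Longrightarrow> 0 < (LINT t|lborel. g t * min (max t 0) a)"
proof -
  assume a: "a > 0"
  define m where "m t = g t * min (max t 0) a" for t
  have mint: "integrable lborel m"
    unfolding m_def
    by (rule Bochner_Integration.integrable_bound[of _ "\<lambda>t. a * g t"])
       (use g_int a m_bound in auto)
  have mnn: "0 \<le> m t" for t using g_nonneg a by (simp add: m_def)
  have "(LINT t|lborel. m t) \<noteq> 0"
  proof
    assume "(LINT t|lborel. m t) = 0"
    hence AE: "AE t in lborel. m t = 0" using integral_nonneg_eq_0_iff_AE[OF mint] mnn by simp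
    have "AE t in lborel. g t * indicator {0<..} t = 0"
      using AE
    proof eventually_elim
      fix t assume "m t = 0"
      thus "g t * indicator {0<..} t = 0" using a by (auto simp: m_def indicator_def)
    qed
    hence "(LINT t|lborel. g t * indicator {0<..} t) = 0" by (rule integral_eq_zero_AE)
    thus False using S_alt[of 0] G0 by simp
  qed
  moreover have "0 \<le> (LINT t|lborel. m t)" using mnn by (intro Bochner_Integration.integral_nonneg) auto
  ultimately show ?thesis by (simp add: m_def)
qed

lemma Phi_lower:
  assumes a: "a > 0" and c: "c \<ge> 1"
  shows "(f a / c) * (LINT t|lborel. g t * min (max t 0) a) \<le> Phi c"
proof -
  have mint: "integrable lborel (\<lambda>t. g t * min (max t 0) a)"
    by (rule Bochner_Integration.integrable_bound[of _ "\<lambda>t. a * g t"])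
       (use g_int a m_bound in auto)
  have pt: "(f a / c) * (g t * min (max t 0) a) \<le> g t * P (t / c)" for t
  proof -
    have "(f a / c) * (g t * min (max t 0) a) = g t * (f a * (min (max t 0) a / c))" by simp
    also have "\<dots> \<le> g t * (f a * min (max (t / c) 0) a)"
      using min_scale[OF c a, of t] f_nonneg g_nonneg by (intro mult_left_mono) auto
    also have "\<dots> \<le> g t * P (t / c)" using P_lower[OF a] g_nonneg by (intro mult_left_mono) auto
    finally show ?thesis .
  qed
  have "(LINT t|lborel. (f a / c) * (g t * min (max t 0) a)) \<le> Phi c"
    unfolding Phi_def using c mint by (intro integral_mono pt Phi_int integrable_mult_right) auto
  thus ?thesis by simp
qed

lemma Disc_countable: "countable {s\<in>{0<..}. \<not> isCont f s}"
proof -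
  have "mono_on {0<..} (\<lambda>x. - f x)"
    using f_anti by (auto simp: monotone_on_def)
  hence ct: "countable {s\<in>{0<..}. \<not> isCont (\<lambda>x. - f x) s}"
    by (intro mono_on_ctble_discont_open) auto
  have imp: "isCont f s" if "isCont (\<lambda>x. - f x) s" for s
    using isCont_minus[OF that] by simp
  show ?thesis by (rule countable_subset[OF _ ct]) (use imp in auto)
qed

definition Dt :: "real \<Rightarrow> real \<Rightarrow> real" where
  "Dt c t = (if t > 0 then g t * (f (t / c) * (- t / c\<^sup>2)) else 0)"

lemma Dt_meas[measurable]: "Dt c \<in> borel_measurable borel"
  unfolding Dt_def[abs_def] by measurable

lemma Dt_bound: "c > 0 \<Longrightarrow> \<bar>Dt c t\<bar> \<le> (M / c\<^sup>2) * w0 t"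
proof -
  assume c: "c > 0"
  show ?thesis
  proof (cases "t > 0")
    case False thus ?thesis using w0_nonneg[of t] M_nonneg by (simp add: Dt_def)
  next
    case True
    have "\<bar>Dt c t\<bar> = g t * f (t / c) * t / c\<^sup>2"
      using True c g_nonneg f_nonneg by (simp add: Dt_def abs_mult)
    also have "\<dots> \<le> g t * M * t / c\<^sup>2"
      using True c g_nonneg f_le_M
      by (intro divide_right_mono mult_right_mono mult_left_mono) auto
    also have "\<dots> = (M / c\<^sup>2) * w0 t" using True by (simp add: w0_def)
    finally show ?thesis .
  qed
qed

lemma Dt_int: "c > 0 \<Longrightarrow> integrable lborel (Dt c)"
  by (rule Bochner_Integration.integrable_bound[of _ "\<lambda>t. (M / c\<^sup>2) * w0 t"])
     (use w0_int Dt_bound w0_nonneg M_nonneg in \<open>auto simp: abs_mult\<close>)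

lemma quot_bound:
  assumes c: "c > 0" and h: "h > c / 2" "h \<noteq> c"
  shows "\<bar>g t * ((P (t / h) - P (t / c)) / (h - c))\<bar> \<le> (2 * M / c\<^sup>2) * w0 t"
proof (cases "t > 0")
  case False
  have "t / h \<le> 0" "t / c \<le> 0" using False c h by (auto simp: divide_le_0_iff)
  thus ?thesis using w0_nonneg[of t] M_nonneg by (simp add: P_nonpos)
next
  case True
  have hp: "h > 0" using c h by simp
  have "\<bar>P (t / h) - P (t / c)\<bar> \<le> M * \<bar>t / h - t / c\<bar>" by (rule P_lip)
  also have "\<bar>t / h - t / c\<bar> = t * \<bar>h - c\<bar> / (h * c)"
  proof -
    have "t / h - t / c = t * (c - h) / (h * c)" using hp c by (simp add: field_simps)
    thus ?thesis using True hp c by (simp add: abs_mult abs_divide abs_minus_commute)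
  qed
  finally have "\<bar>(P (t / h) - P (t / c)) / (h - c)\<bar> \<le> M * t / (h * c)"
    using h hp c by (simp add: abs_divide divide_le_eq field_simps)
  also have "\<dots> \<le> 2 * M * t / c\<^sup>2"
    using True hp c h M_nonneg by (simp add: divide_le_eq field_simps power2_eq_square mult_left_mono)
  finally have q: "\<bar>(P (t / h) - P (t / c)) / (h - c)\<bar> \<le> 2 * M * t / c\<^sup>2" .
  have "\<bar>g t * ((P (t / h) - P (t / c)) / (h - c))\<bar> = g t * \<bar>(P (t / h) - P (t / c)) / (h - c)\<bar>"
    using g_nonneg by (simp add: abs_mult)
  also have "\<dots> \<le> g t * (2 * M * t / c\<^sup>2)" using q g_nonneg by (intro mult_left_mono) auto
  also have "\<dots> = (2 * M / c\<^sup>2) * w0 t" using True by (simp add: w0_def)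
  finally show ?thesis .
qed

lemma Phi_deriv:
  assumes c: "c > 0"
  shows "(Phi has_real_derivative (LINT t|lborel. Dt c t)) (at c)"
proof -
  define s where "s h t = g t * ((P (t / h) - P (t / c)) / (h - c))" for h t
  have ev_pos: "\<forall>\<^sub>F h in at c. h > c / 2"
    using order_tendstoD(1)[OF tendsto_ident_at[of c UNIV], of "c / 2"] c by simp
  have ev_ne: "\<forall>\<^sub>F h in at c. h \<noteq> c" by (rule eventually_neq_at_within)
  have quot: "\<forall>\<^sub>F h in at c. (Phi h - Phi c) / (h - c) = (LINT t|lborel. s h t)"
    using ev_pos
  proof eventually_elim
    fix h assume "h > c / 2"
    hence hp: "h > 0" using c by simp
    have "Phi h - Phi c = (LINT t|lborel. g t * P (t / h) - g t * P (t / c))"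
      unfolding Phi_def using Phi_int[OF hp] Phi_int[OF c] by simp
    also have "\<dots> = (LINT t|lborel. g t * (P (t / h) - P (t / c)))"
      by (simp add: right_diff_distrib)
    finally have "(Phi h - Phi c) / (h - c) = (LINT t|lborel. g t * (P (t / h) - P (t / c))) / (h - c)"
      by simp
    also have "\<dots> = (LINT t|lborel. g t * (P (t / h) - P (t / c)) / (h - c))"
      by (rule integral_divide_zero[symmetric])
    finally show "(Phi h - Phi c) / (h - c) = (LINT t|lborel. s h t)"
      by (simp add: s_def)
  qed
  have lim: "((\<lambda>h. LINT t|lborel. s h t) \<longlongrightarrow> (LINT t|lborel. Dt c t)) (at c)"
  proof (rule integral_dominated_convergence_at[where w="\<lambda>t. (2 * M / c\<^sup>2) * w0 t"])
    show "s h \<in> borel_measurable lborel" for h unfolding s_def[abs_def] by measurable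
    show "Dt c \<in> borel_measurable lborel" by measurable
    show "integrable lborel (\<lambda>t. (2 * M / c\<^sup>2) * w0 t)" using w0_int by simp
    show "\<forall>\<^sub>F h in at c. AE t in lborel. norm (s h t) \<le> (2 * M / c\<^sup>2) * w0 t"
      using ev_pos ev_ne
    proof eventually_elim
      fix h assume "h > c / 2" "h \<noteq> c"
      thus "AE t in lborel. norm (s h t) \<le> (2 * M / c\<^sup>2) * w0 t"
        using quot_bound[OF c] by (auto simp: s_def)
    qed
    define N where "N = insert 0 ((\<lambda>x. c * x) ` {s\<in>{0<..}. \<not> isCont f s})"
    have "countable N" unfolding N_def using Disc_countable by auto
    hence "AE t in lborel. t \<notin> N" by (intro AE_not_in countable_imp_null_set_lborel)
    thus "AE t in lborel. ((\<lambda>h. s h t) \<longlongrightarrow> Dt c t) (at c)"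
    proof eventually_elim
      fix t assume tN: "t \<notin> N"
      show "((\<lambda>h. s h t) \<longlongrightarrow> Dt c t) (at c)"
      proof (cases "t > 0")
        case False
        hence "t < 0" using tN by (auto simp: N_def)
        have "\<forall>\<^sub>F h in at c. s h t = 0" using ev_pos
        proof eventually_elim
          fix h assume "h > c / 2"
          hence "t / h \<le> 0" "t / c \<le> 0" using c \<open>t < 0\<close> by (auto simp: divide_le_0_iff)
          thus "s h t = 0" by (simp add: s_def P_nonpos)
        qed
        thus ?thesis using False by (simp add: Dt_def tendsto_eventually)
      next
        case True
        have "t / c \<in> {0<..}" using True c by simp
        moreover have "t = c * (t / c)" using c by simp
        ultimately have cont: "isCont f (t / c)" using tN unfolding N_def by blast
        have d1: "(P has_real_derivative f (t / c)) (at (t / c))"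
          using P_deriv[OF _ cont] True c by simp
        have d2: "((\<lambda>h. t / h) has_real_derivative (- t / c\<^sup>2)) (at c)"
          using c by (auto intro!: derivative_eq_intros simp: power2_eq_square field_simps)
        have "((\<lambda>h. P (t / h)) has_real_derivative f (t / c) * (- t / c\<^sup>2)) (at c)"
          using DERIV_chain2[OF d1 d2] .
        hence "((\<lambda>h. (P (t / h) - P (t / c)) / (h - c)) \<longlongrightarrow> f (t / c) * (- t / c\<^sup>2)) (at c)"
          by (simp add: has_field_derivative_iff)
        hence "((\<lambda>h. g t * ((P (t / h) - P (t / c)) / (h - c))) \<longlongrightarrow> g t * (f (t / c) * (- t / c\<^sup>2))) (at c)"
          by (rule tendsto_mult_left)
        thus ?thesis using True by (simp add: s_def Dt_def)
      qed
    qed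
  qed
  have "((\<lambda>h. (Phi h - Phi c) / (h - c)) \<longlongrightarrow> (LINT t|lborel. Dt c t)) (at c)"
    using tendsto_cong[OF quot] lim by simp
  thus ?thesis by (simp add: has_field_derivative_iff)
qed

lemma D_bound: "c > 0 \<Longrightarrow> \<bar>LINT t|lborel. Dt c t\<bar> \<le> (M / c\<^sup>2) * K"
proof -
  assume c: "c > 0"
  have "\<bar>LINT t|lborel. Dt c t\<bar> \<le> (LINT t|lborel. \<bar>Dt c t\<bar>)"
    using integral_norm_bound[of lborel "Dt c"] by simp
  also have "\<dots> \<le> (LINT t|lborel. (M / c\<^sup>2) * w0 t)"
    using Dt_bound[OF c] Dt_int[OF c] w0_int by (intro integral_mono) auto
  also have "\<dots> = (M / c\<^sup>2) * K" by (simp add: K_def)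
  finally show ?thesis .
qed

lemma MTV_pos: "c > 0 \<Longrightarrow> M_TV f G c = 1/2 - 2 * Phi c"
  unfolding M_TV_def using T_eq[of c] by simp

lemma MTV_odd: "M_TV f G (- c) = - M_TV f G c"
proof -
  have "\<bar>2 * G (- c * x) - 1\<bar> = \<bar>2 * G (c * x) - 1\<bar>" for x
    using G_symm[of "c * x"] by simp
  thus ?thesis unfolding M_TV_def by (simp add: sgn_minus)
qed

lemma MTV_nonneg: "c > 0 \<Longrightarrow> 0 \<le> M_TV f G c"
  unfolding M_TV_def using f_nonneg
  by (auto intro!: Bochner_Integration.integral_nonneg)

lemma MTV_deriv: "c > 0 \<Longrightarrow> deriv (M_TV f G) c = - 2 * (LINT t|lborel. Dt c t)"
proof -
  assume c: "c > 0"
  have "((\<lambda>x. 1/2 - 2 * Phi x) has_real_derivative (- 2 * (LINT t|lborel. Dt c t))) (at c)"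
    using Phi_deriv[OF c] by (auto intro!: derivative_eq_intros)
  hence "(M_TV f G has_real_derivative (- 2 * (LINT t|lborel. Dt c t))) (at c)"
    by (rule has_field_derivative_transform_within_open[of _ _ _ "{0<..}"]) (use c MTV_pos in auto)
  thus ?thesis by (rule DERIV_imp_deriv)
qed

lemma deriv_sym: "deriv (M_TV f G) (- c) = deriv (M_TV f G) c"
proof -
  have eq: "M_TV f G = (\<lambda>x. - M_TV f G (- x))" using MTV_odd by (simp add: fun_eq_iff)
  have "(M_TV f G has_real_derivative D) (at (- c)) \<longleftrightarrow> (M_TV f G has_real_derivative D) (at c)" for D
  proof -
    have "(M_TV f G has_real_derivative D) (at (- c)) \<longleftrightarrow> ((\<lambda>x. M_TV f G (- x)) has_real_derivative - D) (at c)"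
      by (rule DERIV_mirror)
    also have "\<dots> \<longleftrightarrow> ((\<lambda>x. - M_TV f G (- x)) has_real_derivative D) (at c)"
      using DERIV_minus[of "\<lambda>x. M_TV f G (- x)" "- D" c UNIV] DERIV_minus[of "\<lambda>x. - M_TV f G (- x)" D c UNIV]
      by auto
    also have "\<dots> \<longleftrightarrow> (M_TV f G has_real_derivative D) (at c)" using eq[symmetric] by simp
    finally show ?thesis .
  qed
  thus ?thesis unfolding deriv_def by simp
qed

lemma powr_half_bound:
  fixes y e :: real assumes "1/2 \<le> y" "y \<le> 1"
  shows "y powr e \<le> 1 + (1/2) powr e"
proof (cases "e \<ge> 0")
  case True
  have "y powr e \<le> 1 powr e" using assms True by (intro powr_mono2) auto
  hence "y powr e \<le> 1" by simp
  moreover have "0 \<le> (1/2::real) powr e" by simp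
  ultimately show ?thesis by linarith
next
  case False
  have "y powr e \<le> (1/2) powr e" using assms False by (intro powr_mono2') auto
  thus ?thesis by simp
qed

lemma powr_sandwich:
  fixes x L U c e :: real
  assumes L: "0 < L" and c: "c \<ge> 1" and lo: "L / c \<le> x" and hi: "x \<le> U / c"
  shows "x powr e \<le> (L powr e + U powr e) * c powr (- e)"
proof -
  have cp: "c > 0" using c by simp
  have xp: "x > 0" using divide_pos_pos[OF L cp] lo by linarith
  have "U / c > 0" using xp hi by linarith
  hence Up: "U > 0" using cp by (simp add: zero_less_divide_iff)
  have LUe: "0 \<le> L powr e" "0 \<le> U powr e" by auto
  have cm: "(z / c) powr e = z powr e * c powr (- e)" for z
    by (simp add: powr_divide powr_minus_divide)
  show ?thesis
  proof (cases "e \<ge> 0")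
    case True
    have "x powr e \<le> (U / c) powr e" using True xp hi by (intro powr_mono2) auto
    also have "\<dots> = U powr e * c powr (- e)" by (rule cm)
    also have "\<dots> \<le> (L powr e + U powr e) * c powr (- e)" using LUe by (intro mult_right_mono) auto
    finally show ?thesis .
  next
    case False
    have "x powr e \<le> (L / c) powr e" using False L cp lo by (intro powr_mono2') auto
    also have "\<dots> = L powr e * c powr (- e)" by (rule cm)
    also have "\<dots> \<le> (L powr e + U powr e) * c powr (- e)" using LUe by (intro mult_right_mono) auto
    finally show ?thesis .
  qed
qed

lemma pi_tail_top:
  assumes a: "a > 0" and b: "b > 0"
  shows "pi_TV f G a b \<in> O[at_top](\<lambda>c. \<bar>c\<bar> powr (- b - 1))"
proof -
  obtain a0 where a0: "a0 > 0" "f a0 > 0" using exists_pos by auto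
  define Km where "Km = (LINT t|lborel. g t * min (max t 0) a0)"
  have Km: "Km > 0" unfolding Km_def using Km_pos[OF a0(1)] .
  define L where "L = 2 * f a0 * Km"
  define U where "U = 2 * M * K"
  have L: "L > 0" using a0 Km by (simp add: L_def)
  have B: "Beta a b > 0" unfolding Beta_def
    using a b by (intro divide_pos_pos mult_pos_pos Gamma_real_pos) auto
  define C1 where "C1 = 1 + (1/2) powr (a - 1)"
  define C where "C = (1 / Beta a b) * C1 * (L powr (b - 1) + U powr (b - 1)) * U"
  show ?thesis
  proof (rule bigoI[where c = C])
    show "\<forall>\<^sub>F c in at_top. norm (pi_TV f G a b c) \<le> C * norm (\<bar>c\<bar> powr (- b - 1))"
      unfolding eventually_at_top_linorder
    proof (intro exI[of _ 1] allI impI)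
      fix c :: real assume c: "c \<ge> 1"
      hence cp: "c > 0" by simp
      define x where "x = 1/2 - M_TV f G c"
      define y where "y = M_TV f G c + 1/2"
      have x: "x = 2 * Phi c" using MTV_pos[OF cp] by (simp add: x_def)
      have e1: "L / c = 2 * ((f a0 / c) * Km)" by (simp add: L_def)
      have e2: "U / c = 2 * ((M / c) * K)" by (simp add: U_def)
      have xlo: "L / c \<le> x" using Phi_lower[OF a0(1) c, folded Km_def] unfolding e1 x by linarith
      have xhi: "x \<le> U / c" using Phi_upper[OF cp] unfolding e2 x by linarith
      have ylo: "1/2 \<le> y" using MTV_nonneg[OF cp] by (simp add: y_def)
      have yhi: "y \<le> 1" using Phi_nonneg[of c] MTV_pos[OF cp] by (simp add: y_def)
      have Y: "y powr (a - 1) \<le> C1" unfolding C1_def by (rule powr_half_bound[OF ylo yhi])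
      have X: "x powr (b - 1) \<le> (L powr (b - 1) + U powr (b - 1)) * c powr (- (b - 1))"
        by (rule powr_sandwich[OF L c xlo xhi])
      have D: "\<bar>deriv (M_TV f G) c\<bar> \<le> U / c\<^sup>2"
      proof -
        have "\<bar>deriv (M_TV f G) c\<bar> = 2 * \<bar>LINT t|lborel. Dt c t\<bar>" using MTV_deriv[OF cp] by (simp add: abs_mult)
        also have "\<dots> \<le> 2 * ((M / c\<^sup>2) * K)" using D_bound[OF cp] by simp
        also have "\<dots> = U / c\<^sup>2" by (simp add: U_def)
        finally show ?thesis .
      qed
      have "norm (pi_TV f G a b c) = (1 / Beta a b) * y powr (a - 1) * x powr (b - 1) * \<bar>deriv (M_TV f G) c\<bar>"
        unfolding pi_TV_def x_def y_def using B by (simp add: abs_mult)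
      also have "\<dots> \<le> (1 / Beta a b) * C1 * ((L powr (b - 1) + U powr (b - 1)) * c powr (- (b - 1))) * (U / c\<^sup>2)"
      proof -
        have A1: "0 \<le> 1 / Beta a b" using B by simp
        have C1n: "0 \<le> C1" by (simp add: C1_def)
        have s1: "(1 / Beta a b) * y powr (a - 1) \<le> (1 / Beta a b) * C1"
          using Y A1 by (rule mult_left_mono)
        have s2: "(1 / Beta a b) * y powr (a - 1) * x powr (b - 1) \<le> (1 / Beta a b) * C1 * ((L powr (b - 1) + U powr (b - 1)) * c powr (- (b - 1)))"
          by (rule mult_mono[OF s1 X]) (use A1 C1n in auto)
        show ?thesis
          by (rule mult_mono[OF s2 D]) (use A1 C1n in auto)
      qed
      also have "\<dots> = C * (c powr (- (b - 1)) / c\<^sup>2)" by (simp add: C_def)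
      also have "c powr (- (b - 1)) / c\<^sup>2 = c powr (- b - 1)"
      proof -
        have "c powr 2 = c\<^sup>2" using cp by simp
        moreover have "c powr (- (b - 1)) / c powr 2 = c powr (- (b - 1) - 2)" by (rule powr_diff[symmetric])
        moreover have "- (b - 1) - 2 = - b - 1" by simp
        ultimately show ?thesis by metis
      qed
      also have "c powr (- b - 1) = norm (\<bar>c\<bar> powr (- b - 1))" using cp by simp
      finally show "norm (pi_TV f G a b c) \<le> C * norm (\<bar>c\<bar> powr (- b - 1))" .
    qed
  qed
qed

end

theorem corollary1:
  fixes f g G :: "real \<Rightarrow> real" and M \<alpha> \<beta> :: real
  assumes f_nonneg: "\<And>x. f x \<ge> 0"
    and f_int: "integrable lborel f"
    and f_prob: "(LINT x|lborel. f x) = 1"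
    and f_symm: "\<And>x. f (- x) = f x"
    and f_unimodal: "antimono_on {0..} f" "mono_on {..0} f"
    and f_M: "f 0 = M"
    and f_moment: "set_integrable lborel {0..} (\<lambda>x. x * f x)"
    and g_nonneg: "\<And>x. g x \<ge> 0"
    and g_int: "integrable lborel g"
    and g_prob: "(LINT x|lborel. g x) = 1"
    and G_cdf: "\<And>x. G x = (LINT t:{..x}|lborel. g t)"
    and G_symm: "\<And>x. G (- x) = 1 - G x"
    and g_bdd: "\<exists>B. \<forall>x. g x \<le> B"
    and g_moment: "set_integrable lborel {0..} (\<lambda>x. x * g x)"
    and \<alpha>_pos: "\<alpha> > 0" and \<beta>_pos: "\<beta> > 0"
  shows "pi_TV f G \<alpha> \<beta> \<in> O[at_top](\<lambda>lam. \<bar>lam\<bar> powr (- \<beta> - 1))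
    \<and> pi_TV f G \<alpha> \<beta> \<in> O[at_bot](\<lambda>lam. \<bar>lam\<bar> powr (- \<alpha> - 1))
    \<and> (\<alpha> = \<beta> \<longrightarrow> (\<forall>lam. pi_TV f G \<alpha> \<beta> (- lam) = pi_TV f G \<alpha> \<beta> lam))"
proof -
  note A = f_nonneg f_int f_prob f_symm f_unimodal f_M g_nonneg g_int g_prob G_cdf G_symm g_moment
  have top: "\<And>a b. a > 0 \<Longrightarrow> b > 0 \<Longrightarrow> pi_TV f G a b \<in> O[at_top](\<lambda>lam. \<bar>lam\<bar> powr (- b - 1))"
    by (rule pi_tail_top[OF A])
  have odd: "\<And>c. M_TV f G (- c) = - M_TV f G c" by (rule MTV_odd[OF A])
  have dsym: "\<And>c. deriv (M_TV f G) (- c) = deriv (M_TV f G) c" by (rule deriv_sym[OF A])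
  have swap: "pi_TV f G a b (- c) = pi_TV f G b a c" for a b c
    unfolding pi_TV_def odd dsym by (simp add: Beta_commute algebra_simps)
  have bot: "pi_TV f G \<alpha> \<beta> \<in> O[at_bot](\<lambda>lam. \<bar>lam\<bar> powr (- \<alpha> - 1))"
  proof -
    from top[OF \<beta>_pos \<alpha>_pos] obtain C where C: "C > 0"
      "\<forall>\<^sub>F x in at_top. norm (pi_TV f G \<beta> \<alpha> x) \<le> C * norm (\<bar>x\<bar> powr (- \<alpha> - 1))"
      by (elim landau_o.bigE)
    from C(2) obtain N where N: "\<And>x. x \<ge> N \<Longrightarrow> norm (pi_TV f G \<beta> \<alpha> x) \<le> C * norm (\<bar>x\<bar> powr (- \<alpha> - 1))"
      by (auto simp: eventually_at_top_linorder)
    show ?thesis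
    proof (rule bigoI[where c = C])
      show "\<forall>\<^sub>F x in at_bot. norm (pi_TV f G \<alpha> \<beta> x) \<le> C * norm (\<bar>x\<bar> powr (- \<alpha> - 1))"
        unfolding eventually_at_bot_linorder
      proof (intro exI[of _ "- N"] allI impI)
        fix x :: real assume "x \<le> - N"
        hence "- x \<ge> N" by simp
        from N[OF this] show "norm (pi_TV f G \<alpha> \<beta> x) \<le> C * norm (\<bar>x\<bar> powr (- \<alpha> - 1))"
          using swap[of \<alpha> \<beta> "- x"] by simp
      qed
    qed
  qed
  have sym: "\<alpha> = \<beta> \<longrightarrow> (\<forall>lam. pi_TV f G \<alpha> \<beta> (- lam) = pi_TV f G \<alpha> \<beta> lam)"
    using swap by simp
  show ?thesis using top[OF \<alpha>_pos \<beta>_pos] bot sym by blast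
qed

end
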